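(* The unary language $\mathtt{UGAUSS}=\{a^{n^2+n}\mid n\in\mathbb{N}\}$ is recognized by some real-time deterministic vector automaton of dimension $2$ ($\mathrm{rtDVA}(2)$).
   Context: Here $\mathbb{N}=\{0,1,2,\dots\}$. A real-time deterministic vector automaton of dimension $k$ ($\mathrm{rtDVA}(k)$) is a 6-tuple $\mathcal{V}=(Q,\Sigma,\delta,q_0,Q_a,v)$ where $Q$ is a finite set of states, $q_0\in Q$ the initial state, $Q_a\subseteq Q$ the accept states, $\Sigma$ the input alphabet, $v\in\mathbb{Q}^k$ an initial row vector (freely chosen), and $\delta:Q\times(\Sigma\cup\{\cent,\$\})\times\{=,\neq\}\to Q\times S$, with $S$ the set of $k\times k$ rational matrices. On input $w$ the machine reads $\cent w\$$ left to right, one symbol per step, starting in $q_0$ with vector $v$; in state $q$ reading $\sigma$, with $\omega$ equal to "$=$" iff the first vector entry equals $1$, if $\delta(q,\sigma,\omega)=(q',M)$ it moves to $q'$ and multiplies the row vector on the right by $M$. The input is accepted iff after processing $\$$ the state is in $Q_a$ and the first vector entry equals $1$. *)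

theory Defs
  imports Main "HOL.Rat"
begin

datatype 'a tape_sym = Cent | Sym 'a | Dollar

text \<open>Row vectors of dimension k are functions nat => rat (entries 0..k-1 used);
  k x k matrices are functions nat => nat => rat (entries below k used).
  Row vector times matrix:\<close>
definition vecmul :: "nat \<Rightarrow> (nat \<Rightarrow> rat) \<Rightarrow> (nat \<Rightarrow> nat \<Rightarrow> rat) \<Rightarrow> (nat \<Rightarrow> rat)" where
  "vecmul k v M = (\<lambda>j. \<Sum>i<k. v i * M i j)"

text \<open>Transition function: state, symbol, test (True means the first entry equals 1)
  giving new state and matrix.\<close>
type_synonym ('q, 'a) dva_trans =
  "'q \<Rightarrow> 'a tape_sym \<Rightarrow> bool \<Rightarrow> 'q \<times> (nat \<Rightarrow> nat \<Rightarrow> rat)"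

fun dva_run :: "nat \<Rightarrow> ('q, 'a) dva_trans \<Rightarrow> 'q \<Rightarrow> (nat \<Rightarrow> rat) \<Rightarrow> 'a tape_sym list
                 \<Rightarrow> 'q \<times> (nat \<Rightarrow> rat)" where
  "dva_run k \<delta> q v [] = (q, v)"
| "dva_run k \<delta> q v (\<sigma> # s) =
     (let (q', M) = \<delta> q \<sigma> (v 0 = 1) in dva_run k \<delta> q' (vecmul k v M) s)"

definition is_rtDVA :: "nat \<Rightarrow> 'q set \<Rightarrow> 'a set \<Rightarrow> ('q, 'a) dva_trans \<Rightarrow> 'q \<Rightarrow> 'q set
                        \<Rightarrow> (nat \<Rightarrow> rat) \<Rightarrow> bool" where
  "is_rtDVA k Q \<Sigma> \<delta> q0 Qa v \<longleftrightarrow>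
     1 \<le> k \<and> finite Q \<and> q0 \<in> Q \<and> Qa \<subseteq> Q \<and>
     (\<forall>q\<in>Q. \<forall>\<sigma> b. (\<sigma> = Cent \<or> \<sigma> = Dollar \<or> (\<exists>a\<in>\<Sigma>. \<sigma> = Sym a))
                  \<longrightarrow> fst (\<delta> q \<sigma> b) \<in> Q)"

definition dva_accepts :: "nat \<Rightarrow> ('q, 'a) dva_trans \<Rightarrow> 'q \<Rightarrow> 'q set \<Rightarrow> (nat \<Rightarrow> rat)
                           \<Rightarrow> 'a list \<Rightarrow> bool" where
  "dva_accepts k \<delta> q0 Qa v w =
     (let (q, u) = dva_run k \<delta> q0 v (Cent # map Sym w @ [Dollar]) in q \<in> Qa \<and> u 0 = 1)"

text \<open>L (a language over Sigma) is recognized by some rtDVA(k). States are drawn from nat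
  (any finite state set can be renamed into nat).\<close>
definition rtDVA_recognizable :: "nat \<Rightarrow> 'a set \<Rightarrow> 'a list set \<Rightarrow> bool" where
  "rtDVA_recognizable k \<Sigma> L \<longleftrightarrow>
     (\<exists>(Q :: nat set) \<delta> q0 Qa v. is_rtDVA k Q \<Sigma> \<delta> q0 Qa v \<and>
        {w \<in> lists \<Sigma>. dva_accepts k \<delta> q0 Qa v w} = L)"

definition UGAUSS :: "unit list set" where
  "UGAUSS = {replicate (n^2 + n) () | n :: nat. True}"

end

theory Submission
  imports Defs
begin

definition M1 :: "nat \<Rightarrow> nat \<Rightarrow> rat" where
  "M1 = (\<lambda>i j. if i = 1 \<and> j = 0 then 2 else if i = 1 \<and> j = 1 then 4 else 0)"
definition M2 :: "nat \<Rightarrow> nat \<Rightarrow> rat" where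
  "M2 = (\<lambda>i j. if i = 0 \<and> j = 0 then 1/2 else if i = 1 \<and> j = 1 then 1 else 0)"
definition MI :: "nat \<Rightarrow> nat \<Rightarrow> rat" where
  "MI = (\<lambda>i j. if i = j then 1 else 0)"

definition gd :: "(nat, unit) dva_trans" where
  "gd = (\<lambda>q \<sigma> b. (0::nat, if \<sigma> = Sym () then (if b then M1 else M2) else MI))"

definition stp :: "(nat \<Rightarrow> rat) \<Rightarrow> (nat \<Rightarrow> rat)" where
  "stp v = vecmul 2 v (if v 0 = 1 then M1 else M2)"

lemma sum2: "(\<Sum>i<(2::nat). f i) = f 0 + (f 1 :: rat)"
  by (simp add: numeral_2_eq_2)

lemma stp0: "stp v 0 = (if v 0 = 1 then 2 * v 1 else v 0 / 2)"
  by (simp add: stp_def vecmul_def sum2 M1_def M2_def)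
lemma stp1: "stp v 1 = (if v 0 = 1 then 4 * v 1 else v 1)"
  by (simp add: stp_def vecmul_def sum2 M1_def M2_def)
lemma stp1': "stp v (Suc 0) = (if v 0 = 1 then 4 * v (Suc 0) else v (Suc 0))"
  using stp1 by simp

lemma run_rep:
  "dva_run 2 gd 0 v (replicate m (Sym ()) @ rest) = dva_run 2 gd 0 ((stp^^m) v) rest"
proof (induction m arbitrary: v)
  case 0 then show ?case by simp
next
  case (Suc m)
  have 1: "dva_run 2 gd 0 v (replicate (Suc m) (Sym ()) @ rest)
      = dva_run 2 gd 0 (stp v) (replicate m (Sym ()) @ rest)"
    by (simp add: gd_def stp_def)
  have 2: "(stp^^m) (stp v) = (stp^^Suc m) v" by (simp only: funpow_Suc_right comp_def)
  show ?case using 1 2 Suc[of "stp v"] by simp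
qed

definition v0 :: "nat \<Rightarrow> rat" where "v0 = vecmul 2 (\<lambda>_. 1) MI"

definition g :: "nat \<Rightarrow> nat \<Rightarrow> rat" where "g m = (stp^^m) v0"

lemma g_Suc: "g (Suc m) = stp (g m)" by (simp add: g_def)

lemma v0_vals: "v0 0 = 1" "v0 1 = 1" "v0 (Suc 0) = 1"
  unfolding v0_def vecmul_def sum2 by (simp_all add: MI_def)

lemma main:
  "g (n^2+n) 0 = 1 \<and> g (n^2+n) 1 = 4^n \<and>
   (\<forall>j. 0 < j \<and> j \<le> 2*n+2 \<longrightarrow> g (n^2+n+j) 0 = 2^(2*n+2-j) \<and> g (n^2+n+j) 1 = 4^(n+1))"
proof (induction n)
  case 0
  have B: "g 0 0 = 1 \<and> g 0 1 = 1" by (simp add: g_def v0_vals)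
  have "\<forall>j. 0 < j \<and> j \<le> 2 \<longrightarrow> g j 0 = 2^(2-j) \<and> g j 1 = 4"
  proof (intro allI impI)
    fix j :: nat assume "0 < j \<and> j \<le> 2"
    then have "j = 1 \<or> j = 2" by auto
    moreover have "g 1 0 = 2 \<and> g 1 1 = 4" using B by (simp add: g_Suc[of 0, simplified] stp0 stp1 stp1')
    moreover have "g 2 0 = 1 \<and> g 2 1 = 4"
    proof -
      have "g 2 = stp (g 1)" using g_Suc[of 1] by (simp add: numeral_2_eq_2)
      then show ?thesis using \<open>g 1 0 = 2 \<and> g 1 1 = 4\<close> by (simp add: stp0 stp1 stp1')
    qed
    ultimately show "g j 0 = 2^(2-j) \<and> g j 1 = 4" by auto
  qed
  then show ?case using B by (simp add: numeral_2_eq_2)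
next
  case (Suc n)
  have B: "g (Suc n ^2 + Suc n) 0 = 1 \<and> g (Suc n ^2 + Suc n) 1 = 4^Suc n"
  proof -
    have e: "Suc n ^2 + Suc n = n^2+n+(2*n+2)" by (simp add: power2_eq_square)
    show ?thesis using Suc.IH[THEN conjunct2, THEN conjunct2, rule_format, of "2*n+2"]
      unfolding e by simp
  qed
  define N where "N = Suc n"
  have BN: "g (N^2+N) 0 = 1 \<and> g (N^2+N) 1 = 4^N" using B N_def by simp
  have A: "0 < j \<Longrightarrow> j \<le> 2*N+2 \<Longrightarrow> g (N^2+N+j) 0 = 2^(2*N+2-j) \<and> g (N^2+N+j) 1 = 4^(N+1)" for j
  proof (induction j)
    case 0 then show ?case by simp
  next
    case (Suc j)
    show ?case
    proof (cases "j = 0")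
      case True
      have "g (N^2+N+Suc 0) = stp (g (N^2+N))" by (simp add: g_Suc[symmetric])
      then show ?thesis using True BN
        by (simp add: stp0 stp1 stp1' power_add power_mult)
    next
      case False
      then have IH: "g (N^2+N+j) 0 = 2^(2*N+2-j) \<and> g (N^2+N+j) 1 = 4^(N+1)"
        using Suc by simp
      obtain e where e: "2*N+2-j = Suc e" "2*N+2-Suc j = e" using Suc.prems
        by (metis Suc_diff_Suc Suc_le_lessD diff_Suc_Suc)
      have ne: "(2::rat)^Suc e \<noteq> 1"
        by (metis one_less_numeral_iff one_less_power semiring_norm(76) less_irrefl zero_less_Suc)
      have "g (N^2+N+Suc j) = stp (g (N^2+N+j))" by (simp add: g_Suc[symmetric])
      then show ?thesis using IH e ne by (simp add: stp0 stp1 stp1')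
    qed
  qed
  show ?case using BN A unfolding N_def by blast
qed

lemma decomp: "\<exists>n j. (m::nat) = n^2+n+j \<and> j < 2*n+2"
proof (induction m)
  case 0 show ?case by (rule exI[of _ 0], rule exI[of _ 0], simp)
next
  case (Suc m)
  then obtain n j where nj: "m = n^2+n+j" "j < 2*n+2" by blast
  show ?case
  proof (cases "Suc j < 2*n+2")
    case True then show ?thesis using nj by (intro exI[of _ n] exI[of _ "Suc j"]) simp
  next
    case False
    then have "Suc j = 2*n+2" using nj by simp
    then have "Suc m = (Suc n)^2 + Suc n + 0" using nj by (simp add: power2_eq_square)
    then show ?thesis by (intro exI[of _ "Suc n"] exI[of _ 0]) simp
  qed
qed

lemma mono_sq: "(k::nat) \<le> n \<Longrightarrow> k^2+k \<le> n^2+n"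
  by (simp add: add_mono power_mono)

lemma char: "g m 0 = 1 \<longleftrightarrow> (\<exists>n. m = n^2+n)"
proof -
  obtain n j where nj: "m = n^2+n+j" "j < 2*n+2" using decomp by blast
  show ?thesis
  proof (cases "j = 0")
    case True then show ?thesis using nj main[of n] by auto
  next
    case False
    then obtain e where e: "2*n+2-j = Suc e" using nj
      by (metis Suc_diff_Suc add_2_eq_Suc' add_Suc_right)
    have ne: "(2::rat)^Suc e \<noteq> 1"
      by (metis one_less_numeral_iff one_less_power semiring_norm(76) less_irrefl zero_less_Suc)
    have "g m 0 \<noteq> 1" using main[of n] nj False e ne by auto
    moreover have "\<not> (\<exists>k. m = k^2+k)"
    proof
      assume "\<exists>k. m = k^2+k"
      then obtain k where k: "m = k^2+k" by blast
      show False
      proof (cases "k \<le> n")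
        case True then show False using mono_sq[OF True] k nj False by simp
      next
        case f: False
        then have "Suc n \<le> k" by simp
        from mono_sq[OF this] have "(Suc n)^2 + Suc n \<le> m" using k by simp
        then show False using nj by (simp add: power2_eq_square)
      qed
    qed
    ultimately show ?thesis by blast
  qed
qed

lemma unit_list: "(w :: unit list) = replicate (length w) ()"
  by (induction w) auto

theorem theorem2:
  shows "rtDVA_recognizable 2 (UNIV :: unit set) UGAUSS"
  unfolding rtDVA_recognizable_def
proof (intro exI conjI)
  show "is_rtDVA 2 {0::nat} (UNIV :: unit set) gd 0 {0} (\<lambda>_. 1)"
    by (simp add: is_rtDVA_def gd_def)
  show "{w \<in> lists UNIV. dva_accepts 2 gd 0 {0} (\<lambda>_. 1) w} = UGAUSS"
  proof (intro set_eqI iffI)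
    fix w :: "unit list"
    have acc: "dva_accepts 2 gd 0 {0} (\<lambda>_. 1) w \<longleftrightarrow> g (length w) 0 = 1"
    proof -
      have "dva_run 2 gd 0 (\<lambda>_. 1) (Cent # map Sym w @ [Dollar])
          = dva_run 2 gd 0 v0 (map Sym (replicate (length w) ()) @ [Dollar])"
      proof -
        have "map Sym w = replicate (length w) (Sym ())" by (induction w) auto
        then show ?thesis by (simp add: gd_def v0_def)
      qed
      also have "\<dots> = dva_run 2 gd 0 (g (length w)) [Dollar]"
        using run_rep
        by (simp add: run_rep g_def)
      also have "\<dots> = (0, vecmul 2 (g (length w)) MI)" by (simp add: gd_def)
      finally show ?thesis
        by (simp add: dva_accepts_def vecmul_def sum2 MI_def)
    qed
    have ug: "w \<in> UGAUSS \<longleftrightarrow> (\<exists>n. length w = n^2+n)"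
    proof
      assume "w \<in> UGAUSS" then show "\<exists>n. length w = n^2+n" unfolding UGAUSS_def by auto
    next
      assume "\<exists>n. length w = n^2+n"
      then obtain n where "length w = n^2+n" by blast
      then have "w = replicate (n^2+n) ()" using unit_list[of w] by simp
      then show "w \<in> UGAUSS" unfolding UGAUSS_def by blast
    qed
    show "w \<in> {w \<in> lists UNIV. dva_accepts 2 gd 0 {0} (\<lambda>_. 1) w} \<Longrightarrow> w \<in> UGAUSS"
      using acc ug char by auto
    show "w \<in> UGAUSS \<Longrightarrow> w \<in> {w \<in> lists UNIV. dva_accepts 2 gd 0 {0} (\<lambda>_. 1) w}"
      using acc ug char by auto
  qed
qed

end
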